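(* Let $t\geq 1$ and let $M$ be a subset of $\mathbb{F}_2^t\setminus\{0\}$ with $|M|\geq t+1$. Let $H_M$ be the $t\times |M|$ matrix whose columns are the elements of $M$ (written as column vectors, in some fixed order), and let $C_M=\{v\in\mathbb{F}_2^{|M|} : H_M v^{T}=0\}$ be the associated code, a binary linear code of length $|M|$, dimension $k$ and minimum distance $d$. (a) If $M$ is sum-free and $|M|\geq s_{\max}(t)$, then $d=4$ and $M$ is not Sidon. (b) If $M$ is sum-free and Sidon and $|M|\geq s_{\max}(t-1)$, then $k=|M|-t$ and $H_M$ is a parity check matrix of $C_M$ (i.e. has rank $t$). (c) If $M$ is sum-free and Sidon and $|M|\geq s_{\max}(t-1)+1$, then $d = 5$.
   Context: $\mathbb{F}_2^t$ is the $t$-dimensional vector space over $\mathbb{F}_2$. A subset $M\subseteq \mathbb{F}_2^t$ is Sidon if $m_1+m_2\neq m_3+m_4$ for all pairwise distinct $m_1,m_2,m_3,m_4\in M$; it is sum-free if $m_1+m_2\neq m_3$ for all $m_1,m_2,m_3\in M$ (not necessarily distinct). $s_{\max}(t)$ denotes the maximum size of a Sidon set in $\mathbb{F}_2^t$ (so $s_{\max}(0)=1$). The minimum distance of a binary linear code is the minimum Hamming weight of its nonzero codewords. *)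

theory Defs
  imports "HOL-Library.Z2" "Jordan_Normal_Form.Matrix_Kernel" "Jordan_Normal_Form.DL_Rank"
begin

text \<open>F_2^t is modelled as carrier_vec t of the type bit vec (field with two elements).\<close>

definition sidon :: "bit vec set \<Rightarrow> bool" where
  "sidon M \<longleftrightarrow> (\<forall>m1\<in>M. \<forall>m2\<in>M. \<forall>m3\<in>M. \<forall>m4\<in>M.
      distinct [m1, m2, m3, m4] \<longrightarrow> m1 + m2 \<noteq> m3 + m4)"

definition sum_free :: "bit vec set \<Rightarrow> bool" where
  "sum_free M \<longleftrightarrow> (\<forall>m1\<in>M. \<forall>m2\<in>M. \<forall>m3\<in>M. m1 + m2 \<noteq> m3)"

definition s_max :: "nat \<Rightarrow> nat" where
  "s_max t = Max (card ` {M. M \<subseteq> carrier_vec t \<and> sidon M})"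

definition col_mat :: "nat \<Rightarrow> bit vec list \<Rightarrow> bit mat" where
  "col_mat t ms = mat t (length ms) (\<lambda>(i, j). (ms ! j) $ i)"

definition hamming_weight :: "bit vec \<Rightarrow> nat" where
  "hamming_weight v = card {i. i < dim_vec v \<and> v $ i \<noteq> 0}"

definition min_dist :: "nat \<Rightarrow> bit vec set \<Rightarrow> nat" where
  "min_dist n C = Min (hamming_weight ` (C - {0\<^sub>v n}))"

end

theory Submission
  imports Defs
begin


definition Zs :: "nat \<Rightarrow> bit vec set \<Rightarrow> bool" where
  "Zs d S \<longleftrightarrow> (\<forall>i<d. (\<Sum>x\<in>S. x $ i) = 0)"

lemma bit_add_self': "(x::bit) + x = 0" by simp

lemma bit4: "((a::bit) + b = c + d) = (a + (b + (c + d)) = 0)"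
  by (cases a; cases b; cases c; cases d) simp_all

lemma bit3: "((a::bit) + (b + c) = 0) = (a + b = c)"
  by (cases a; cases b; cases c) simp_all

lemma bit2: "((a::bit) + b = 0) = (a = b)"
  by (cases a; cases b) simp_all

lemma bit_ne0: "(a::bit) \<noteq> 0 \<Longrightarrow> a = 1" by simp

lemma bit_mult1: "(a::bit) * b = (if a = 0 then 0 else b)" by (cases a) simp_all

lemma finite_bit: "finite (UNIV :: bit set)"
proof -
  have "(UNIV :: bit set) = {0, 1}" by (auto intro: bit.exhaust)
  then show ?thesis by (metis finite.emptyI finite.insertI)
qed

declare add_bit_eq_xor[simp del] mult_bit_eq_and[simp del]

lemma card4E: assumes "card P = 4"
  obtains a b c d where "P = {a,b,c,d}" "distinct [a,b,c,d]"
proof -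
  have "card P = Suc (Suc (Suc (Suc 0)))" using assms by simp
  then show ?thesis using that by (auto simp: card_Suc_eq)
qed

lemma card5E: assumes "card P = 5"
  obtains a b c d e where "P = {a,b,c,d,e}" "distinct [a,b,c,d,e]"
proof -
  have "card P = Suc 4" using assms by simp
  then obtain a B where aB: "P = insert a B" "a \<notin> B" "card B = 4" unfolding card_Suc_eq by blast
  then obtain b c d e where "B = {b,c,d,e}" "distinct [b,c,d,e]" by (elim card4E)
  then show ?thesis using that aB by auto
qed

lemma finite_carrier_vec': assumes fu: "finite (UNIV :: 'a set)" shows "finite (carrier_vec n :: 'a vec set)"
proof -
  have "carrier_vec n \<subseteq> vec_of_list ` {xs. set xs \<subseteq> (UNIV::'a set) \<and> length xs = n}"
  proof
    fix v :: "'a vec" assume "v \<in> carrier_vec n"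
    then show "v \<in> vec_of_list ` {xs. set xs \<subseteq> UNIV \<and> length xs = n}"
      by (intro image_eqI[of _ _ "list_of_vec v"]) (auto simp: vec_list)
  qed
  moreover have "finite (vec_of_list ` {xs. set xs \<subseteq> (UNIV::'a set) \<and> length xs = n})"
    using finite_lists_length_eq[OF fu, of n] by (rule finite_imageI)
  ultimately show ?thesis by (rule finite_subset)
qed

lemma s_max_ge:
  assumes "X \<subseteq> carrier_vec t" "sidon X"
  shows "card X \<le> s_max t"
proof -
  have "finite {M. M \<subseteq> carrier_vec t \<and> sidon M}"
    by (rule finite_subset[of _ "Pow (carrier_vec t)"]) (auto simp: finite_carrier_vec' finite_bit)
  then show ?thesis unfolding s_max_def using assms by (intro Max_ge) auto
qed

lemma sidon_iff:
  assumes N: "N \<subseteq> carrier_vec d"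
  shows "sidon N \<longleftrightarrow> (\<forall>P. P \<subseteq> N \<longrightarrow> card P = 4 \<longrightarrow> \<not> Zs d P)"
proof
  assume s: "sidon N"
  show "\<forall>P. P \<subseteq> N \<longrightarrow> card P = 4 \<longrightarrow> \<not> Zs d P"
  proof (intro allI impI notI)
    fix P assume P: "P \<subseteq> N" "card P = 4" "Zs d P"
    then obtain a b c e where Pe: "P = {a,b,c,e}" and dist: "distinct [a,b,c,e]" by (elim card4E)
    have abce: "a \<in> carrier_vec d" "b \<in> carrier_vec d" "c \<in> carrier_vec d" "e \<in> carrier_vec d"
      using P Pe N by auto
    have "a + b = c + e"
    proof (rule eq_vecI)
      fix i assume "i < dim_vec (c + e)"
      hence i: "i < d" using abce by simp
      have "(\<Sum>x\<in>P. x $ i) = 0" using P(3) i unfolding Zs_def by auto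
      hence "a$i + (b$i + (c$i + e$i)) = 0" using dist unfolding Pe by simp
      thus "(a + b) $ i = (c + e) $ i" using abce i by (simp add: bit4)
    qed (use abce in simp)
    thus False using s P Pe dist unfolding sidon_def by auto
  qed
next
  assume h: "\<forall>P. P \<subseteq> N \<longrightarrow> card P = 4 \<longrightarrow> \<not> Zs d P"
  show "sidon N" unfolding sidon_def
  proof (intro ballI impI notI)
    fix a b c e assume mem: "a \<in> N" "b \<in> N" "c \<in> N" "e \<in> N" and dist: "distinct [a,b,c,e]"
      and eq: "a + b = c + e"
    have abce: "a \<in> carrier_vec d" "b \<in> carrier_vec d" "c \<in> carrier_vec d" "e \<in> carrier_vec d"
      using mem N by auto
    have "Zs d {a,b,c,e}" unfolding Zs_def
    proof (intro allI impI)
      fix i assume i: "i < d"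
      have "(a+b)$i = (c+e)$i" using eq by simp
      hence "a$i + b$i = c$i + e$i" using abce i by simp
      hence "a$i + (b$i + (c$i + e$i)) = 0" by (simp add: bit4)
      thus "(\<Sum>x\<in>{a,b,c,e}. x $ i) = 0" using dist by simp
    qed
    moreover have "card {a,b,c,e} = 4" using dist by simp
    ultimately show False using h mem by auto
  qed
qed

lemma LB:
  assumes M: "M \<subseteq> carrier_vec d - {0\<^sub>v d}" and sf: "sum_free M"
    and T: "T \<subseteq> M" "T \<noteq> {}" "finite T" and Z: "Zs d T"
  shows "card T \<ge> 4" and "sidon M \<Longrightarrow> card T \<ge> 5"
proof -
  have c0: "card T \<noteq> 0" using T by simp
  have c1: "card T \<noteq> 1"
  proof
    assume "card T = 1"
    then obtain a where a: "T = {a}" by (auto simp: card_Suc_eq)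
    have ac: "a \<in> carrier_vec d" "a \<noteq> 0\<^sub>v d" using a T M by auto
    have "a = 0\<^sub>v d"
      by (rule eq_vecI) (use Z a ac in \<open>auto simp: Zs_def\<close>)
    with ac show False by simp
  qed
  have c2: "card T \<noteq> 2"
  proof
    assume "card T = 2"
    then obtain a b where ab: "T = {a,b}" "a \<noteq> b" by (auto simp: card_2_iff)
    have ac: "a \<in> carrier_vec d" "b \<in> carrier_vec d" using ab T M by auto
    have "a = b"
    proof (rule eq_vecI)
      fix i assume "i < dim_vec b" hence i: "i < d" using ac by simp
      have "a$i + b$i = 0" using Z i ab unfolding Zs_def by auto
      thus "a $ i = b $ i" by (simp add: bit2)
    qed (use ac in simp)
    with ab show False by simp
  qed
  have c3: "card T \<noteq> 3"
  proof
    assume "card T = 3"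
    then obtain a b c where ab: "T = {a,b,c}" "a \<noteq> b" "b \<noteq> c" "a \<noteq> c" by (auto simp: card_3_iff)
    have ac: "a \<in> carrier_vec d" "b \<in> carrier_vec d" "c \<in> carrier_vec d" using ab T M by auto
    have "a + b = c"
    proof (rule eq_vecI)
      fix i assume "i < dim_vec c" hence i: "i < d" using ac by simp
      have "a$i + (b$i + c$i) = 0" using Z i ab unfolding Zs_def by auto
      thus "(a + b) $ i = c $ i" using ac i by (simp add: bit3)
    qed (use ac in simp)
    with ab T sf show False unfolding sum_free_def by auto
  qed
  show "card T \<ge> 4" using c0 c1 c2 c3 by linarith
  assume s: "sidon M"
  have Mc: "M \<subseteq> carrier_vec d" using M by auto
  have "\<forall>P. P \<subseteq> M \<longrightarrow> card P = 4 \<longrightarrow> \<not> Zs d P" using sidon_iff[OF Mc] s by blast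
  then have "card T = 4 \<longrightarrow> \<not> Zs d T" using T(1) by simp
  then have "card T \<noteq> 4" using Z by simp
  then show "card T \<ge> 5" using c0 c1 c2 c3 by linarith
qed



lemma col_mat_carrier: "col_mat t ms \<in> carrier_mat t (length ms)"
  unfolding col_mat_def by simp

lemma mult_col_mat:
  assumes v: "v \<in> carrier_vec (length ms)" and i: "i < t" and d: "distinct ms"
  shows "(col_mat t ms *\<^sub>v v) $ i = (\<Sum>x\<in>(\<lambda>j. ms ! j) ` {j. j < length ms \<and> v $ j \<noteq> 0}. x $ i)"
proof -
  let ?n = "length ms"
  let ?S = "{j. j < ?n \<and> v $ j \<noteq> 0}"
  have "(col_mat t ms *\<^sub>v v) $ i = (\<Sum>j<?n. (ms ! j) $ i * v $ j)"
    using v i unfolding col_mat_def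
    by (simp add: mult_mat_vec_def scalar_prod_def lessThan_atLeast0)
  also have "\<dots> = (\<Sum>j<?n. if v $ j \<noteq> 0 then (ms ! j) $ i else 0)"
    by (rule sum.cong) auto
  also have "\<dots> = (\<Sum>j\<in>{j\<in>{..<?n}. v $ j \<noteq> 0}. (ms ! j) $ i)"
    by (rule sum.inter_filter[symmetric]) simp
  also have "{j\<in>{..<?n}. v $ j \<noteq> 0} = ?S" by auto
  also have "(\<Sum>j\<in>?S. (ms ! j) $ i) = (\<Sum>x\<in>(\<lambda>j. ms ! j) ` ?S. x $ i)"
    by (subst sum.reindex) (auto intro!: inj_on_nth d)
  finally show ?thesis .
qed

lemma ker_iff:
  assumes v: "v \<in> carrier_vec (length ms)" and d: "distinct ms"
  shows "v \<in> mat_kernel (col_mat t ms) \<longleftrightarrow> Zs t ((\<lambda>j. ms ! j) ` {j. j < length ms \<and> v $ j \<noteq> 0})"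
proof -
  have "v \<in> mat_kernel (col_mat t ms) \<longleftrightarrow> col_mat t ms *\<^sub>v v = 0\<^sub>v t"
    using v unfolding mat_kernel_def col_mat_def by auto
  also have "\<dots> \<longleftrightarrow> (\<forall>i<t. (col_mat t ms *\<^sub>v v) $ i = 0)"
    by (auto simp: vec_eq_iff col_mat_def)
  also have "\<dots> \<longleftrightarrow> Zs t ((\<lambda>j. ms ! j) ` {j. j < length ms \<and> v $ j \<noteq> 0})"
    unfolding Zs_def using mult_col_mat[OF v _ d] by auto
  finally show ?thesis .
qed

lemma hw_card:
  assumes v: "v \<in> carrier_vec (length ms)" and d: "distinct ms"
  shows "hamming_weight v = card ((\<lambda>j. ms ! j) ` {j. j < length ms \<and> v $ j \<noteq> 0})"
  using v unfolding hamming_weight_def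
  by (subst card_image) (auto intro!: inj_on_nth d)

lemma min_dist_eq:
  assumes d: "distinct ms"
    and ex: "T0 \<subseteq> set ms" "T0 \<noteq> {}" "Zs t T0" "card T0 = k"
    and lb: "\<And>T. T \<subseteq> set ms \<Longrightarrow> T \<noteq> {} \<Longrightarrow> Zs t T \<Longrightarrow> k \<le> card T"
  shows "min_dist (length ms) (mat_kernel (col_mat t ms)) = k"
proof -
  let ?n = "length ms"
  let ?K = "mat_kernel (col_mat t ms) - {0\<^sub>v ?n}"
  let ?H = "hamming_weight ` ?K"
  have Kc: "?K \<subseteq> carrier_vec ?n" unfolding mat_kernel_def col_mat_def by auto
  have fin: "finite ?H"
  proof (rule finite_subset[of _ "{..?n}"])
    show "?H \<subseteq> {..?n}"
    proof
      fix h assume "h \<in> ?H"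
      then obtain v where v: "v \<in> ?K" "h = hamming_weight v" by auto
      have "hamming_weight v \<le> card {..<dim_vec v}"
        unfolding hamming_weight_def by (rule card_mono) auto
      then show "h \<in> {..?n}" using v Kc by auto
    qed
  qed simp
  have lower: "k \<le> h" if "h \<in> ?H" for h
  proof -
    obtain v where v: "v \<in> ?K" "h = hamming_weight v" using \<open>h \<in> ?H\<close> by auto
    have vc: "v \<in> carrier_vec ?n" using v Kc by auto
    let ?T = "(\<lambda>j. ms ! j) ` {j. j < ?n \<and> v $ j \<noteq> 0}"
    have "Zs t ?T" using v ker_iff[OF vc d] by auto
    moreover have "?T \<subseteq> set ms" by auto
    moreover have "?T \<noteq> {}"
    proof
      assume "?T = {}"
      then have "\<forall>j<?n. v $ j = 0" by auto
      then have "v = 0\<^sub>v ?n" using vc by (auto simp: vec_eq_iff)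
      then show False using v by auto
    qed
    ultimately have "k \<le> card ?T" using lb by blast
    then show ?thesis using v hw_card[OF vc d] by simp
  qed
  have mem: "k \<in> ?H"
  proof -
    define v where "v = vec ?n (\<lambda>j. if ms ! j \<in> T0 then (1::bit) else 0)"
    have vc: "v \<in> carrier_vec ?n" unfolding v_def by simp
    have S: "{j. j < ?n \<and> v $ j \<noteq> 0} = {j. j < ?n \<and> ms ! j \<in> T0}" unfolding v_def by (auto split: if_splits)
    have T: "(\<lambda>j. ms ! j) ` {j. j < ?n \<and> v $ j \<noteq> 0} = T0"
    proof
      show "(\<lambda>j. ms ! j) ` {j. j < ?n \<and> v $ j \<noteq> 0} \<subseteq> T0" unfolding S by auto
      show "T0 \<subseteq> (\<lambda>j. ms ! j) ` {j. j < ?n \<and> v $ j \<noteq> 0}"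
      proof
        fix x assume x: "x \<in> T0"
        then have "x \<in> set ms" using ex(1) by auto
        then obtain j where j: "j < ?n" "x = ms ! j" by (metis in_set_conv_nth)
        then show "x \<in> (\<lambda>j. ms ! j) ` {j. j < ?n \<and> v $ j \<noteq> 0}" unfolding S using x by auto
      qed
    qed
    have "v \<in> mat_kernel (col_mat t ms)" using ker_iff[OF vc d] T ex by simp
    moreover have "v \<noteq> 0\<^sub>v ?n"
    proof
      assume "v = 0\<^sub>v ?n"
      then have "{j. j < ?n \<and> v $ j \<noteq> 0} = {}" by auto
      then show False using T ex by auto
    qed
    moreover have "hamming_weight v = k" using hw_card[OF vc d] T ex by simp
    ultimately show ?thesis by force
  qed
  show ?thesis unfolding min_dist_def by (rule Min_eqI[OF fin lower mem])
qed



lemma gen_sidon: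
  assumes fin: "finite M'" and car: "\<And>x. x \<in> M' \<Longrightarrow> \<phi> x \<in> carrier_vec d"
    and nz: "\<And>Q. Q \<subseteq> M' \<Longrightarrow> Q \<noteq> {} \<Longrightarrow> card Q \<le> 4 \<Longrightarrow> (\<forall>k<d. (\<Sum>x\<in>Q. \<phi> x $ k) = 0) \<Longrightarrow> False"
  shows "insert (0\<^sub>v d) (\<phi> ` M') \<subseteq> carrier_vec d" "sidon (insert (0\<^sub>v d) (\<phi> ` M'))"
    "card (insert (0\<^sub>v d) (\<phi> ` M')) = card M' + 1"
proof -
  have inj: "inj_on \<phi> M'"
  proof (rule inj_onI, rule ccontr)
    fix a b assume ab: "a \<in> M'" "b \<in> M'" "\<phi> a = \<phi> b" "a \<noteq> b"
    have "\<forall>k<d. (\<Sum>x\<in>{a,b}. \<phi> x $ k) = 0" using ab by (simp add: bit_add_self')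
    then show False using nz[of "{a,b}"] ab by auto
  qed
  have n0: "0\<^sub>v d \<notin> \<phi> ` M'"
  proof
    assume "0\<^sub>v d \<in> \<phi> ` M'"
    then obtain a where a: "a \<in> M'" "\<phi> a = 0\<^sub>v d" by auto
    have "\<forall>k<d. (\<Sum>x\<in>{a}. \<phi> x $ k) = 0" using a by simp
    then show False using nz[of "{a}"] a by auto
  qed
  show sub: "insert (0\<^sub>v d) (\<phi> ` M') \<subseteq> carrier_vec d" using car by auto
  show "card (insert (0\<^sub>v d) (\<phi> ` M')) = card M' + 1"
    using n0 inj fin by (simp add: card_image)
  show "sidon (insert (0\<^sub>v d) (\<phi> ` M'))"
    unfolding sidon_iff[OF sub]
  proof (intro allI impI notI)
    fix P assume P: "P \<subseteq> insert (0\<^sub>v d) (\<phi> ` M')" "card P = 4" "Zs d P"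
    define Q where "Q = {x\<in>M'. \<phi> x \<in> P}"
    have QP: "\<phi> ` Q = P - {0\<^sub>v d}"
    proof
      show "\<phi> ` Q \<subseteq> P - {0\<^sub>v d}" using n0 unfolding Q_def by (auto simp: image_iff)
      show "P - {0\<^sub>v d} \<subseteq> \<phi> ` Q" using P(1) unfolding Q_def by auto
    qed
    have injQ: "inj_on \<phi> Q" using inj by (rule inj_on_subset) (auto simp: Q_def)
    have finP: "finite P" using P(2) by (metis card.infinite zero_neq_numeral)
    have cQ: "card Q = card (P - {0\<^sub>v d})" using QP injQ card_image by metis
    have c3: "card (P - {0\<^sub>v d}) \<ge> 3" using P(2) finP by (simp add: card_Diff_singleton_if)
    have c4: "card (P - {0\<^sub>v d}) \<le> 4" using P(2) finP by (simp add: card_Diff_singleton_if)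
    have Qsub: "Q \<subseteq> M'" unfolding Q_def by auto
    have Qne: "Q \<noteq> {}" using cQ c3 by auto
    have "\<forall>k<d. (\<Sum>x\<in>Q. \<phi> x $ k) = 0"
    proof (intro allI impI)
      fix k assume k: "k < d"
      have "(\<Sum>x\<in>Q. \<phi> x $ k) = (\<Sum>p\<in>\<phi> ` Q. p $ k)"
        by (subst sum.reindex[OF injQ]) simp
      also have "\<dots> = (\<Sum>p\<in>P - {0\<^sub>v d}. p $ k)" unfolding QP ..
      also have "\<dots> = (\<Sum>p\<in>P. p $ k)"
        using finP k by (simp add: sum_diff1)
      also have "\<dots> = 0" using P(3) k unfolding Zs_def by auto
      finally show "(\<Sum>x\<in>Q. \<phi> x $ k) = 0" .
    qed
    then show False using nz[OF Qsub Qne] cQ c4 by auto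
  qed
qed

lemma phib:
  assumes i: "i < t" and Q: "finite Q" and Qc: "Q \<subseteq> carrier_vec t"
    and ne: "vec t (\<lambda>j. \<Sum>x\<in>Q. x $ j) \<noteq> unit_vec t i"
    and z: "\<forall>k<t-1. (\<Sum>x\<in>Q. vec (t-1) (\<lambda>k. x $ (if k < i then k else Suc k)) $ k) = 0"
  shows "Zs t Q"
proof -
  have sj: "(\<Sum>x\<in>Q. x $ j) = 0" if j: "j < t" "j \<noteq> i" for j
  proof -
    define k where "k = (if j < i then j else j - 1)"
    have k: "k < t - 1" "(if k < i then k else Suc k) = j" using j i unfolding k_def by auto
    have "(\<Sum>x\<in>Q. vec (t-1) (\<lambda>k. x $ (if k < i then k else Suc k)) $ k) = 0" using z k by auto
    then show ?thesis using k by simp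
  qed
  show ?thesis
  proof (cases "(\<Sum>x\<in>Q. x $ i) = 0")
    case True
    then show ?thesis unfolding Zs_def using sj by (metis)
  next
    case False
    then have "(\<Sum>x\<in>Q. x $ i) = 1" by simp
    then have "vec t (\<lambda>j. \<Sum>x\<in>Q. x $ j) = unit_vec t i"
      using sj by (intro eq_vecI) (auto simp: unit_vec_def)
    with ne show ?thesis by simp
  qed
qed

lemma phic:
  assumes i: "i < t" and m0i: "m0 $ i = 1" and Q: "finite Q" "m0 \<notin> Q"
    and z: "\<forall>k<t-1. (\<Sum>x\<in>Q. vec (t-1) (\<lambda>k. x $ (if k < i then k else Suc k)
              + x $ i * m0 $ (if k < i then k else Suc k)) $ k) = 0"
  shows "Zs t Q \<or> Zs t (insert m0 Q)"
proof -
  define s where "s j = (\<Sum>x\<in>Q. x $ j)" for j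
  have sj: "s j + s i * m0 $ j = 0" if j: "j < t" "j \<noteq> i" for j
  proof -
    define k where "k = (if j < i then j else j - 1)"
    have k: "k < t - 1" "(if k < i then k else Suc k) = j" using j i unfolding k_def by auto
    have "(\<Sum>x\<in>Q. vec (t-1) (\<lambda>k. x $ (if k < i then k else Suc k)
              + x $ i * m0 $ (if k < i then k else Suc k)) $ k) = 0" using z k by auto
    then have "(\<Sum>x\<in>Q. x $ j + x $ i * m0 $ j) = 0" using k by simp
    then show ?thesis unfolding s_def by (simp add: sum.distrib sum_distrib_right)
  qed
  show ?thesis
  proof (cases "s i = 0")
    case True
    have "\<forall>j<t. s j = 0"
    proof (intro allI impI)
      fix j assume "j < t" then show "s j = 0" using sj[of j] True by (cases "j = i") auto
    qed
    then show ?thesis unfolding Zs_def s_def by auto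
  next
    case False
    then have si: "s i = 1" by simp
    have "\<forall>j<t. m0 $ j + s j = 0"
    proof (intro allI impI)
      fix j assume j: "j < t"
      show "m0 $ j + s j = 0"
      proof (cases "j = i")
        case True then show ?thesis using si m0i by (simp add: bit_add_self')
      next
        case False then have "s j + m0 $ j = 0" using sj[OF j] si by simp
        then show ?thesis by (simp add: add.commute)
      qed
    qed
    then show ?thesis unfolding Zs_def s_def using Q by auto
  qed
qed

lemma rank_nullity_mat:
  fixes A :: "'a::field mat"
  assumes A: "A \<in> carrier_mat nr nc"
  shows "kernel_dim A + vec_space.rank nr A = nc"
proof -
  interpret K: kernel nr nc A by unfold_locales (rule A)
  interpret W: vec_space "TYPE('a)" nr .
  interpret L: linear_map class_ring "module_vec TYPE('a) nc" "module_vec TYPE('a) nr" "\<lambda>v. A *\<^sub>v v"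
    apply (intro_locales)
    apply (unfold mod_hom_axioms_def LinearCombinations.module_hom_def)
    using A by (auto simp: module_vec_simps mult_add_distrib_mat_vec[OF A] mult_mat_vec[OF A])
  have ker: "L.kerT = mat_kernel A" unfolding L.ker_def mat_kernel_def using A by (auto simp: module_vec_simps)
  have im: "L.imT = W.span (set (cols A))" unfolding L.im_def W.col_space_eq[OF A, unfolded W.col_space_def] 
    using A by (auto simp: module_vec_simps)
  have "vectorspace.dim class_ring (W.vs L.imT) + vectorspace.dim class_ring (K.NC.vs L.kerT) = K.NC.dim"
    by (rule L.rank_nullity) simp
  then show ?thesis unfolding ker im K.NC.dim_is_n W.rank_def K.kernel_dim by simp
qed



theorem theorem3p2:
  fixes t :: nat and M :: "bit vec set" and ms :: "bit vec list"
  assumes "t \<ge> 1"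
    and "M \<subseteq> carrier_vec t - {0\<^sub>v t}"
    and "card M \<ge> t + 1"
    and "distinct ms" and "set ms = M"
  shows "(sum_free M \<and> card M \<ge> s_max t \<longrightarrow>
            min_dist (card M) (mat_kernel (col_mat t ms)) = 4 \<and> \<not> sidon M)
       \<and> (sum_free M \<and> sidon M \<and> card M \<ge> s_max (t - 1) \<longrightarrow>
            kernel_dim (col_mat t ms) = card M - t \<and> vec_space.rank t (col_mat t ms) = t)
       \<and> (sum_free M \<and> sidon M \<and> card M \<ge> s_max (t - 1) + 1 \<longrightarrow>
            min_dist (card M) (mat_kernel (col_mat t ms)) = 5)"
proof -
  let ?n = "length ms"
  let ?A = "col_mat t ms"
  have cardM: "card M = ?n" using assms(4,5) distinct_card by metis
  have Mc: "M \<subseteq> carrier_vec t" using assms(2) by auto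
  have finM: "finite M" using assms(5) by auto
  note LB' = LB[OF assms(2)]
  have partA: "sum_free M \<and> card M \<ge> s_max t \<longrightarrow>
            min_dist (card M) (mat_kernel ?A) = 4 \<and> \<not> sidon M"
  proof (intro impI)
    assume h: "sum_free M \<and> s_max t \<le> card M"
    then have sf: "sum_free M" by simp
    have ns: "\<not> sidon M"
    proof
      assume sd: "sidon M"
      have nz: "\<And>Q. Q \<subseteq> M \<Longrightarrow> Q \<noteq> {} \<Longrightarrow> card Q \<le> 4 \<Longrightarrow> (\<forall>k<t. (\<Sum>x\<in>Q. x $ k) = 0) \<Longrightarrow> False"
      proof -
        fix Q assume Q: "Q \<subseteq> M" "Q \<noteq> {}" "card Q \<le> 4" and z: "\<forall>k<t. (\<Sum>x\<in>Q. x $ k) = 0"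
        have fQ: "finite Q" using Q finM finite_subset by auto
        have "Zs t Q" using z unfolding Zs_def by simp
        then show False using LB'(2)[OF sf Q(1,2) fQ _ sd] Q(3) by auto
      qed
      have car: "\<And>x. x \<in> M \<Longrightarrow> (\<lambda>x. x) x \<in> carrier_vec t" using Mc by auto
      note G = gen_sidon[of M "\<lambda>x. x" t, OF finM car nz]
      have "card M + 1 \<le> s_max t" using s_max_ge[OF G(1) G(2)] G(3) by simp
      then show False using h by simp
    qed
    then obtain P where P: "P \<subseteq> M" "card P = 4" "Zs t P" using sidon_iff[OF Mc] by auto
    have "min_dist ?n (mat_kernel ?A) = 4"
    proof (rule min_dist_eq[OF assms(4), of P])
      show "P \<subseteq> set ms" "Zs t P" "card P = 4" using P assms(5) by auto
      show "P \<noteq> {}" using P(2) by auto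
      fix T assume T: "T \<subseteq> set ms" "T \<noteq> {}" "Zs t T"
      have fT: "finite T" using T(1) finite_subset by auto
      show "4 \<le> card T" using LB'(1)[OF sf _ T(2) fT T(3)] T(1) assms(5) by auto
    qed
    then show "min_dist (card M) (mat_kernel ?A) = 4 \<and> \<not> sidon M" using ns cardM by simp
  qed
  have partB: "sum_free M \<and> sidon M \<and> card M \<ge> s_max (t - 1) \<longrightarrow>
            kernel_dim ?A = card M - t \<and> vec_space.rank t ?A = t"
  proof (intro impI)
    assume h: "sum_free M \<and> sidon M \<and> s_max (t - 1) \<le> card M"
    then have sf: "sum_free M" and sd: "sidon M" by auto
    interpret W: vec_space "TYPE(bit)" t .
    have units: "unit_vec t i \<in> W.span M" if i: "i < t" for i
    proof (rule ccontr)
      assume nsp: "unit_vec t i \<notin> W.span M"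
      define \<phi> where "\<phi> x = vec (t-1) (\<lambda>k. x $ (if k < i then k else Suc k))" for x :: "bit vec"
      have nz: "\<And>Q. Q \<subseteq> M \<Longrightarrow> Q \<noteq> {} \<Longrightarrow> card Q \<le> 4 \<Longrightarrow> (\<forall>k<t-1. (\<Sum>x\<in>Q. \<phi> x $ k) = 0) \<Longrightarrow> False"
      proof -
        fix Q assume Q: "Q \<subseteq> M" "Q \<noteq> {}" "card Q \<le> 4" and z: "\<forall>k<t-1. (\<Sum>x\<in>Q. \<phi> x $ k) = 0"
        have fQ: "finite Q" using Q finM finite_subset by auto
        have Qc: "Q \<subseteq> carrier_vec t" using Q Mc by auto
        have "W.lincomb (\<lambda>_. 1) Q \<in> W.span M" unfolding W.span_def using Q fQ by blast
        moreover have "W.lincomb (\<lambda>_. 1) Q = vec t (\<lambda>j. \<Sum>x\<in>Q. x $ j)"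
        proof (rule eq_vecI)
          show "dim_vec (W.lincomb (\<lambda>_. 1) Q) = dim_vec (vec t (\<lambda>j. \<Sum>x\<in>Q. x $ j))"
            using W.lincomb_dim[OF fQ Qc] by simp
          fix j assume "j < dim_vec (vec t (\<lambda>j. \<Sum>x\<in>Q. x $ j))"
          then have j: "j < t" by simp
          show "W.lincomb (\<lambda>_. 1) Q $ j = vec t (\<lambda>j. \<Sum>x\<in>Q. x $ j) $ j"
            using W.lincomb_index[OF j Qc] j by simp
        qed
        ultimately have ne: "vec t (\<lambda>j. \<Sum>x\<in>Q. x $ j) \<noteq> unit_vec t i" using nsp by auto
        have "Zs t Q"
          by (rule phib[OF i fQ Qc ne]) (use z in \<open>simp add: \<phi>_def\<close>)
        then show False using LB'(2)[OF sf Q(1,2) fQ _ sd] Q(3) by auto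
      qed
      have car: "\<And>x. x \<in> M \<Longrightarrow> \<phi> x \<in> carrier_vec (t-1)" by (simp add: \<phi>_def)
      note G = gen_sidon[of M \<phi> "t-1", OF finM car nz]
      have "card M + 1 \<le> s_max (t-1)" using s_max_ge[OF G(1) G(2)] G(3) by simp
      then show False using h by simp
    qed
    have sp: "W.span M = carrier_vec t"
    proof
      show "W.span M \<subseteq> carrier_vec t" using W.span_is_subset2[of M] Mc by simp
      have "carrier_vec t = W.span (set (unit_vecs t))" using W.span_unit_vecs_is_carrier by simp
      also have "\<dots> \<subseteq> W.span M"
      proof (rule W.span_is_subset)
        show "set (unit_vecs t) \<subseteq> W.span M" using units by (auto simp: unit_vecs_def)
        show "submodule class_ring (W.span M) W.V" by (rule W.span_is_submodule) (use Mc in simp)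
      qed
      finally show "carrier_vec t \<subseteq> W.span M" .
    qed
    have colsA: "cols ?A = ms"
    proof (rule nth_equalityI)
      show "length (cols ?A) = length ms" unfolding col_mat_def by simp
      fix j assume "j < length (cols ?A)"
      then have j: "j < length ms" unfolding col_mat_def by simp
      have mj: "ms ! j \<in> carrier_vec t" using j Mc assms(5) by auto
      show "cols ?A ! j = ms ! j"
        using j mj unfolding col_mat_def by (auto simp: col_def intro!: eq_vecI)
    qed
    have VV: "W.V\<lparr>carrier := carrier_vec t\<rparr> = W.V" by (simp add: module_vec_def)
    have rank: "W.rank ?A = t"
      unfolding W.rank_def colsA assms(5) sp VV using W.dim_is_n .
    have "kernel_dim ?A + t = ?n" using rank_nullity_mat[OF col_mat_carrier[of t ms]] rank by simp
    then show "kernel_dim ?A = card M - t \<and> vec_space.rank t ?A = t" using rank cardM by simp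
  qed
  have partC: "sum_free M \<and> sidon M \<and> card M \<ge> s_max (t - 1) + 1 \<longrightarrow>
            min_dist (card M) (mat_kernel ?A) = 5"
  proof (intro impI)
    assume h: "sum_free M \<and> sidon M \<and> s_max (t - 1) + 1 \<le> card M"
    then have sf: "sum_free M" and sd: "sidon M" by auto
    have ex5: "\<exists>T. T \<subseteq> M \<and> card T = 5 \<and> Zs t T"
    proof (rule ccontr)
      assume no5: "\<not> (\<exists>T. T \<subseteq> M \<and> card T = 5 \<and> Zs t T)"
      have "M \<noteq> {}" using assms(3) by auto
      then obtain m0 where m0: "m0 \<in> M" by auto
      have m0c: "m0 \<in> carrier_vec t" "m0 \<noteq> 0\<^sub>v t" using m0 assms(2) by auto
      have "\<exists>i<t. m0 $ i \<noteq> 0"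
      proof (rule ccontr)
        assume "\<not> (\<exists>i<t. m0 $ i \<noteq> 0)"
        then have "m0 = 0\<^sub>v t" using m0c(1) by (intro eq_vecI) auto
        then show False using m0c(2) by simp
      qed
      then obtain i where i: "i < t" "m0 $ i = 1" by auto
      define \<phi> where "\<phi> x = vec (t-1) (\<lambda>k. x $ (if k < i then k else Suc k)
              + x $ i * m0 $ (if k < i then k else Suc k))" for x :: "bit vec"
      have nz: "\<And>Q. Q \<subseteq> M - {m0} \<Longrightarrow> Q \<noteq> {} \<Longrightarrow> card Q \<le> 4 \<Longrightarrow> (\<forall>k<t-1. (\<Sum>x\<in>Q. \<phi> x $ k) = 0) \<Longrightarrow> False"
      proof -
        fix Q assume Q: "Q \<subseteq> M - {m0}" "Q \<noteq> {}" "card Q \<le> 4" and z: "\<forall>k<t-1. (\<Sum>x\<in>Q. \<phi> x $ k) = 0"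
        have fQ: "finite Q" using Q finM finite_subset by auto
        have QM: "Q \<subseteq> M" "m0 \<notin> Q" using Q by auto
        have "Zs t Q \<or> Zs t (insert m0 Q)"
          by (rule phic[OF i fQ QM(2)]) (use z in \<open>simp add: \<phi>_def\<close>)
        then show False
        proof
          assume "Zs t Q" then show False using LB'(2)[OF sf QM(1) Q(2) fQ _ sd] Q(3) by auto
        next
          assume Z: "Zs t (insert m0 Q)"
          have ci: "card (insert m0 Q) = card Q + 1" using fQ QM by simp
          have "card (insert m0 Q) \<ge> 5" using LB'(2)[OF sf _ _ _ Z sd] m0 QM fQ by auto
          then have "card (insert m0 Q) = 5" using ci Q(3) by simp
          then show False using no5 Z m0 QM by auto
        qed
      qed
      have car: "\<And>x. x \<in> M - {m0} \<Longrightarrow> \<phi> x \<in> carrier_vec (t-1)" by (simp add: \<phi>_def)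
      have finM': "finite (M - {m0})" using finM by simp
      note G = gen_sidon[of "M - {m0}" \<phi> "t-1", OF finM' car nz]
      have "card (M - {m0}) + 1 \<le> s_max (t-1)" using s_max_ge[OF G(1) G(2)] G(3) by simp
      moreover have "card (M - {m0}) + 1 = card M" using m0 finM
        by (simp add: card_Diff_singleton) (metis Suc_pred card_gt_0_iff empty_iff)
      ultimately show False using h by simp
    qed
    then obtain T where T: "T \<subseteq> M" "card T = 5" "Zs t T" by auto
    have "min_dist ?n (mat_kernel ?A) = 5"
    proof (rule min_dist_eq[OF assms(4), of T])
      show "T \<subseteq> set ms" "Zs t T" "card T = 5" using T assms(5) by auto
      show "T \<noteq> {}" using T(2) by auto
      fix T' assume T': "T' \<subseteq> set ms" "T' \<noteq> {}" "Zs t T'"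
      have fT: "finite T'" using T'(1) finite_subset by auto
      show "5 \<le> card T'" using LB'(2)[OF sf _ T'(2) fT T'(3) sd] T'(1) assms(5) by auto
    qed
    then show "min_dist (card M) (mat_kernel ?A) = 5" using cardM by simp
  qed
  show ?thesis using partA partB partC by blast
qed


end
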